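(* For all $\mathbf x,\mathbf y\in\Omega$, $|g(\mathbf x)\wedge g(\mathbf y)|\ge|\mathbf x\wedge\mathbf y|-2$. In other words, for $k\ge1$, the first $k$ letters of $g(\mathbf x)$ are determined by the first $k+2$ letters of $\mathbf x$.
   Context: Let $\Sigma=\{1,\dots,N\}$ with $N\ge4$, and let $\tau,\kappa,\alpha,\gamma\in\Sigma$ be distinct except that $\tau=\alpha$ is allowed. $\Sigma^*$ denotes finite words, $a^k$ the word of $k$ copies of $a$, $\Omega=\{\omega\kappa^\infty:\omega\in\Sigma^*\}$, and $\mathbf x\wedge\mathbf y$ the maximal common prefix, $|\cdot|$ its length. Let $\mathcal C_M=\{\tau\gamma^k:k\ge2\}\cup\{\kappa\alpha^k\kappa\gamma:k\ge0\}$ and $\mathcal C_{M'}=\{\kappa\alpha^k\kappa\gamma:k\ge0\}\cup\{\kappa\alpha^k\kappa\gamma\gamma:k\ge0\}\cup\{\tau\gamma\gamma\}$; letters of $\Sigma$ are one-letter words. The $M$-decomposition of $\mathbf x\in\Omega$ is $\mathbf x=X_1X_2\cdots$ where each $X_k$ is the longest prefix of the remaining tail $X_kX_{k+1}\cdots$ lying in $\mathcal C_M\cup\Sigma$. Define $g_0:\mathcal C_M\cup\Sigma\to\mathcal C_{M'}\cup\Sigma$ by $\tau\gamma^k\mapsto\kappa\alpha^{k-2}\kappa\gamma$ ($k\ge2$), $\kappa\alpha^k\kappa\gamma\mapsto\kappa\alpha^{k-1}\kappa\gamma\gamma$ ($k\ge1$), $\kappa\kappa\gamma\mapsto\tau\gamma\gamma$,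 $i\mapsto i$ ($i\in\Sigma$), and $g:\Omega\to\Omega$ by $g(\mathbf x)=\prod_{j\ge1}g_0(X_j)$ (concatenation). *)

theory Defs
  imports Main "HOL-Library.Extended_Nat"
begin

type_synonym word = "nat \<Rightarrow> nat"

definition Sigma :: "nat \<Rightarrow> nat set" where
  "Sigma N = {1..N}"

definition Omega :: "nat \<Rightarrow> nat \<Rightarrow> word set" where
  "Omega N \<kappa> = {x. (\<forall>i. x i \<in> Sigma N) \<and> (\<exists>n. \<forall>i\<ge>n. x i = \<kappa>)}"

text \<open>Membership in C_M union Sigma (letters as one-letter words).\<close>
definition inCM :: "nat \<Rightarrow> nat \<Rightarrow> nat \<Rightarrow> nat \<Rightarrow> nat \<Rightarrow> nat list \<Rightarrow> bool" where
  "inCM N \<tau> \<kappa> \<alpha> \<gamma> w \<longleftrightarrow>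
     (\<exists>k\<ge>2. w = \<tau> # replicate k \<gamma>) \<or>
     (\<exists>k. w = \<kappa> # replicate k \<alpha> @ [\<kappa>, \<gamma>]) \<or>
     (\<exists>i\<in>Sigma N. w = [i])"

definition g0 :: "nat \<Rightarrow> nat \<Rightarrow> nat \<Rightarrow> nat \<Rightarrow> nat list \<Rightarrow> nat list" where
  "g0 \<tau> \<kappa> \<alpha> \<gamma> w =
     (if (\<exists>k\<ge>2. w = \<tau> # replicate k \<gamma>)
      then \<kappa> # replicate (length w - 3) \<alpha> @ [\<kappa>, \<gamma>]
      else if (\<exists>k\<ge>1. w = \<kappa> # replicate k \<alpha> @ [\<kappa>, \<gamma>])
      then \<kappa> # replicate (length w - 4) \<alpha> @ [\<kappa>, \<gamma>, \<gamma>]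
      else if w = [\<kappa>, \<kappa>, \<gamma>] then [\<tau>, \<gamma>, \<gamma>]
      else w)"

definition blen :: "nat \<Rightarrow> nat \<Rightarrow> nat \<Rightarrow> nat \<Rightarrow> nat \<Rightarrow> word \<Rightarrow> nat" where
  "blen N \<tau> \<kappa> \<alpha> \<gamma> x = (GREATEST n. inCM N \<tau> \<kappa> \<alpha> \<gamma> (map x [0..<n]))"

text \<open>Starting positions of the blocks X_1, X_2, ... of the M-decomposition (0-indexed).\<close>
fun bpos :: "nat \<Rightarrow> nat \<Rightarrow> nat \<Rightarrow> nat \<Rightarrow> nat \<Rightarrow> word \<Rightarrow> nat \<Rightarrow> nat" where
  "bpos N \<tau> \<kappa> \<alpha> \<gamma> x 0 = 0"
| "bpos N \<tau> \<kappa> \<alpha> \<gamma> x (Suc j) =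
     bpos N \<tau> \<kappa> \<alpha> \<gamma> x j + blen N \<tau> \<kappa> \<alpha> \<gamma> (\<lambda>i. x (bpos N \<tau> \<kappa> \<alpha> \<gamma> x j + i))"

definition block :: "nat \<Rightarrow> nat \<Rightarrow> nat \<Rightarrow> nat \<Rightarrow> nat \<Rightarrow> word \<Rightarrow> nat \<Rightarrow> nat list" where
  "block N \<tau> \<kappa> \<alpha> \<gamma> x j =
     map (\<lambda>i. x (bpos N \<tau> \<kappa> \<alpha> \<gamma> x j + i))
         [0..<blen N \<tau> \<kappa> \<alpha> \<gamma> (\<lambda>i. x (bpos N \<tau> \<kappa> \<alpha> \<gamma> x j + i))]"

text \<open>g(x) = g_0(X_1) g_0(X_2) ... ; every g_0-image is nonempty, so the i-th letter
  lies within the images of the first i+1 blocks.\<close>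
definition gmap :: "nat \<Rightarrow> nat \<Rightarrow> nat \<Rightarrow> nat \<Rightarrow> nat \<Rightarrow> word \<Rightarrow> word" where
  "gmap N \<tau> \<kappa> \<alpha> \<gamma> x =
     (\<lambda>i. concat (map (\<lambda>j. g0 \<tau> \<kappa> \<alpha> \<gamma> (block N \<tau> \<kappa> \<alpha> \<gamma> x j)) [0..<Suc i]) ! i)"

definition lcp :: "word \<Rightarrow> word \<Rightarrow> enat" where
  "lcp x y = (if x = y then \<infinity> else enat (LEAST i. x i \<noteq> y i))"

end

theory Submission imports Defs begin

definition sh :: "nat \<Rightarrow> word \<Rightarrow> word" where "sh p x = (\<lambda>i. x (p + i))"

lemma sh_sh: "sh a (sh b x) = sh (b+a) x" by (simp add: sh_def add.assoc)
lemma sh_0[simp]: "sh 0 x = x" by (simp add: sh_def)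

lemma map_eqD: "map z [0..<n] = ws \<Longrightarrow> n = length ws \<and> (\<forall>i<n. z i = ws ! i)"
proof -
  assume h: "map z [0..<n] = ws"
  have "length (map z [0..<n]) = length ws" using h by simp
  moreover have "\<forall>i<n. z i = ws ! i"
  proof (intro allI impI)
    fix i assume "i < n"
    then have "map z [0..<n] ! i = z i" by simp
    then show "z i = ws ! i" using h by simp
  qed
  ultimately show ?thesis by simp
qed

lemma map_eqI: "n = length ws \<Longrightarrow> (\<And>i. i<n \<Longrightarrow> z i = ws ! i) \<Longrightarrow> map z [0..<n] = ws"
  by (rule nth_equalityI) auto

lemma nthT: "i \<le> k \<Longrightarrow> (a # replicate k c) ! i = (if i = 0 then a else c)"
  by (cases i) auto

lemma nthR: "i \<le> k \<Longrightarrow> (a # replicate k b @ ws) ! i = (if i = 0 then a else b)"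
  by (cases i) (auto simp: nth_append)

lemma nthK1: "(a # replicate k b @ [c,d]) ! (k+1) = c"
  by (simp add: nth_append)
lemma nthK2: "(a # replicate k b @ [c,d]) ! (k+2) = d"
  by (simp add: nth_append)

locale L =
  fixes N tau kap alp gam :: nat
  assumes d1: "tau \<noteq> kap" and d2: "tau \<noteq> gam" and d3: "kap \<noteq> alp"
    and d4: "kap \<noteq> gam" and d5: "alp \<noteq> gam"
begin

abbreviation "Om x \<equiv> x \<in> Omega N kap"
abbreviation "bl \<equiv> blen N tau kap alp gam"
abbreviation "gm \<equiv> gmap N tau kap alp gam"
abbreviation "G \<equiv> g0 tau kap alp gam"
abbreviation "bp \<equiv> bpos N tau kap alp gam"
abbreviation "blk \<equiv> block N tau kap alp gam"
abbreviation "P z n \<equiv> inCM N tau kap alp gam (map z [0..<n])"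
definition "B z = map z [0..<bl z]"
definition "LL x n = concat (map (\<lambda>j. G (blk x j)) [0..<n])"
definition Tx :: "word \<Rightarrow> nat \<Rightarrow> bool" where "Tx z k \<longleftrightarrow> k\<ge>2 \<and> z 0 = tau \<and> (\<forall>i. 1\<le>i \<and> i\<le>k \<longrightarrow> z i = gam) \<and> z (k+1) \<noteq> gam"
definition Kx :: "word \<Rightarrow> nat \<Rightarrow> bool" where "Kx z k \<longleftrightarrow> z 0 = kap \<and> (\<forall>i. 1\<le>i \<and> i\<le>k \<longrightarrow> z i = alp) \<and> z (k+1) = kap \<and> z (k+2) = gam"

lemma Om_sh: "Om x \<Longrightarrow> Om (sh p x)"
  apply (auto simp: Omega_def sh_def)
  subgoal for n by (rule exI[of _ n]) auto
  done

lemma bp_shift: "bp x (Suc j) = bl x + bp (sh (bl x) x) j"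
  by (induction j) (simp_all add: sh_def add.assoc)

lemma blk_eq: "blk x j = B (sh (bp x j) x)" by (simp add: block_def B_def sh_def)
lemma blk_Suc: "blk x (Suc j) = blk (sh (bl x) x) j" by (simp only: blk_eq bp_shift sh_sh)
lemma blk_0: "blk x 0 = B x" by (simp add: blk_eq)

lemma P_cases: "P z n \<Longrightarrow> (\<exists>k\<ge>2. n = k+1 \<and> z 0 = tau \<and> (\<forall>i. 1\<le>i\<and>i\<le>k \<longrightarrow> z i = gam)) \<or> (\<exists>k. n = k+3 \<and> Kx z k) \<or> n = 1"
  unfolding inCM_def
proof (elim disjE exE conjE bexE)
  fix k assume k: "2 \<le> k" and h: "map z [0..<n] = tau # replicate k gam"
  from map_eqD[OF h] have n: "n = k+1" and e: "\<forall>i<n. z i = (tau # replicate k gam) ! i" by auto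
  have "z 0 = tau" using e n by auto
  moreover have "\<forall>i. 1\<le>i\<and>i\<le>k \<longrightarrow> z i = gam" using e n nthT by auto
  ultimately show ?thesis using n k by blast
next
  fix k assume h: "map z [0..<n] = kap # replicate k alp @ [kap, gam]"
  from map_eqD[OF h] have n: "n = k+3" and e: "\<forall>i<n. z i = (kap # replicate k alp @ [kap, gam]) ! i" by auto
  have "z 0 = kap" using e n by auto
  moreover have "\<forall>i. 1\<le>i\<and>i\<le>k \<longrightarrow> z i = alp"
  proof (intro allI impI)
    fix i assume "1\<le>i\<and>i\<le>k"
    then show "z i = alp" using e n nthR[of i k kap alp "[kap,gam]"] by auto
  qed
  moreover have "z (k+1) = kap" using e n nthK1[of kap k alp kap gam] by auto
  moreover have "z (k+2) = gam" using e n nthK2[of kap k alp kap gam] by auto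
  ultimately show ?thesis using n unfolding Kx_def by blast
next
  fix i assume "i \<in> Sigma N" "map z [0..<n] = [i]"
  from map_eqD[OF this(2)] show ?thesis by simp
qed

lemma bl_eqI: "P z b \<Longrightarrow> (\<And>n. P z n \<Longrightarrow> n \<le> b) \<Longrightarrow> bl z = b"
  unfolding blen_def by (rule Greatest_equality)

lemma Kx_unique: "Kx z k \<Longrightarrow> Kx z k' \<Longrightarrow> k = k'"
proof (rule ccontr)
  assume a: "Kx z k" "Kx z k'" "k \<noteq> k'"
  show False
  proof (cases "k < k'")
    case True
    then have "z (k+1) = alp" using a(2) unfolding Kx_def by auto
    then show False using a(1) d3 unfolding Kx_def by auto
  next
    case False
    then have "z (k'+1) = alp" using a unfolding Kx_def by auto
    then show False using a(2) d3 unfolding Kx_def by auto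
  qed
qed

lemma B_T: "Tx z k \<Longrightarrow> map z [0..<k+1] = tau # replicate k gam"
  by (rule map_eqI) (auto simp: Tx_def nthT less_Suc_eq_le)

lemma B_K: "Kx z k \<Longrightarrow> map z [0..<k+3] = kap # replicate k alp @ [kap, gam]"
proof (rule map_eqI)
  fix i assume K: "Kx z k" and i: "i < k+3"
  consider "i \<le> k" | "i = k+1" | "i = k+2" using i by linarith
  then show "z i = (kap # replicate k alp @ [kap, gam]) ! i"
  proof cases
    case 1 then show ?thesis using K nthR[of i k kap alp "[kap,gam]"] by (auto simp: Kx_def)
  next
    case 2 then show ?thesis using K nthK1[of kap k alp kap gam] by (simp add: Kx_def)
  next
    case 3 then show ?thesis using K nthK2[of kap k alp kap gam] by (simp add: Kx_def)
  qed
qed simp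

lemma bl_T: "Tx z k \<Longrightarrow> bl z = k+1"
proof (rule bl_eqI)
  assume T: "Tx z k"
  show "P z (k+1)" unfolding B_T[OF T] inCM_def using T by (auto simp: Tx_def)
  fix n assume "P z n"
  from P_cases[OF this] show "n \<le> k+1"
  proof (elim disjE exE conjE)
    fix k' assume "n = k'+1" "z 0 = tau" "\<forall>i. 1\<le>i\<and>i\<le>k' \<longrightarrow> z i = gam"
    note h = this
    show ?thesis
    proof (rule ccontr)
      assume "\<not> n \<le> k+1"
      then have "z (k+1) = gam" using h by auto
      then show False using T unfolding Tx_def by auto
    qed
  next
    fix k' assume "Kx z k'" then show ?thesis using T d1 by (auto simp: Kx_def Tx_def)
  qed simp
qed

lemma bl_K: "Kx z k \<Longrightarrow> bl z = k+3"
proof (rule bl_eqI)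
  assume K: "Kx z k"
  show "P z (k+3)" unfolding B_K[OF K] inCM_def by blast
  fix n assume "P z n"
  from P_cases[OF this] show "n \<le> k+3"
  proof (elim disjE exE conjE)
    fix k' assume "z 0 = tau" then show ?thesis using K d1 by (auto simp: Kx_def)
  next
    fix k' assume "n = k'+3" "Kx z k'" then show ?thesis using K Kx_unique by auto
  qed simp
qed

lemma bl_1: "z 0 \<in> Sigma N \<Longrightarrow> \<not>(z 0 = tau \<and> z 1 = gam \<and> z 2 = gam) \<Longrightarrow> (\<forall>k. \<not> Kx z k) \<Longrightarrow> bl z = 1"
proof (rule bl_eqI)
  assume S: "z 0 \<in> Sigma N" and nT: "\<not>(z 0 = tau \<and> z 1 = gam \<and> z 2 = gam)" and nK: "\<forall>k. \<not> Kx z k"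
  show "P z 1" using S unfolding inCM_def by auto
  fix n assume "P z n"
  from P_cases[OF this] show "n \<le> 1"
  proof (elim disjE exE conjE)
    fix k' assume "2 \<le> k'" "z 0 = tau" "\<forall>i. 1\<le>i\<and>i\<le>k' \<longrightarrow> z i = gam"
    then show ?thesis using nT by auto
  next
    fix k' assume "Kx z k'" then show ?thesis using nK by auto
  qed simp
qed

lemma T_exists: "Om z \<Longrightarrow> z 0 = tau \<Longrightarrow> z 1 = gam \<Longrightarrow> z 2 = gam \<Longrightarrow> \<exists>k. Tx z k"
proof -
  assume O: "Om z" and z: "z 0 = tau" "z 1 = gam" "z 2 = gam"
  obtain m where m: "\<forall>i\<ge>m. z i = kap" using O by (auto simp: Omega_def)
  define t where "t = (LEAST i. 1 \<le> i \<and> z i \<noteq> gam)"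
  have ex: "1 \<le> m+1 \<and> z (m+1) \<noteq> gam" using m d4 by auto
  have t1: "1 \<le> t \<and> z t \<noteq> gam" unfolding t_def by (rule LeastI[of "\<lambda>i. 1 \<le> i \<and> z i \<noteq> gam" "m+1", OF ex])
  have t2: "\<forall>i. 1\<le>i \<and> i<t \<longrightarrow> z i = gam" unfolding t_def using not_less_Least by blast
  have "t \<noteq> 1" "t \<noteq> 2" using t1 z by auto
  then have t3: "t \<ge> 3" using t1 by auto
  have "Tx z (t-1)" unfolding Tx_def using t1 t2 t3 z by auto
  then show ?thesis by blast
qed

lemma G_T: "k\<ge>2 \<Longrightarrow> G (tau # replicate k gam) = kap # replicate (k-2) alp @ [kap,gam]"
proof -
  assume k: "k \<ge> 2"
  have "\<exists>k'\<ge>2. tau # replicate k gam = tau # replicate k' gam" using k by blast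
  then show ?thesis by (simp add: g0_def)
qed

lemma G_K: "k\<ge>1 \<Longrightarrow> G (kap # replicate k alp @ [kap,gam]) = kap # replicate (k-1) alp @ [kap,gam,gam]"
proof -
  assume k: "k \<ge> 1"
  have "\<exists>k'\<ge>1. kap # replicate k alp @ [kap,gam] = kap # replicate k' alp @ [kap,gam]" using k by blast
  then show ?thesis using d1 by (simp add: g0_def)
qed

lemma G_K0: "G [kap,kap,gam] = [tau,gam,gam]"
proof -
  have "\<not>(\<exists>k'\<ge>1. [kap,kap,gam] = kap # replicate k' alp @ [kap,gam])"
  proof
    assume "\<exists>k'\<ge>1. [kap,kap,gam] = kap # replicate k' alp @ [kap,gam]"
    then obtain k' where "k' \<ge> 1" "[kap,kap,gam] = kap # replicate k' alp @ [kap,gam]" by blast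
    then have "length [kap,kap,gam] = length (kap # replicate k' alp @ [kap,gam])" by simp
    then show False using \<open>k' \<ge> 1\<close> by simp
  qed
  then show ?thesis using d1 by (simp add: g0_def)
qed

lemma G_1: "G [c] = [c]"
  by (auto simp: g0_def)


lemma BT: "Tx z k \<Longrightarrow> B z = tau # replicate k gam"
  using B_T bl_T B_def by simp
lemma BK: "Kx z k \<Longrightarrow> B z = kap # replicate k alp @ [kap, gam]"
  using B_K bl_K B_def by simp
lemma B1: "bl z = 1 \<Longrightarrow> B z = [z 0]"
  by (simp add: B_def)

lemma classify: "Om z \<Longrightarrow> (\<exists>k. Tx z k) \<or> (\<exists>k. Kx z k) \<or> (bl z = 1)"
proof -
  assume O: "Om z"
  have S: "z 0 \<in> Sigma N" using O by (auto simp: Omega_def)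
  show ?thesis
  proof (cases "z 0 = tau \<and> z 1 = gam \<and> z 2 = gam")
    case True then show ?thesis using T_exists[OF O] by blast
  next
    case False
    then show ?thesis using bl_1[OF S False] by blast
  qed
qed

lemma len_GB: "Om z \<Longrightarrow> length (G (B z)) = bl z \<and> bl z \<ge> 1"
proof -
  assume O: "Om z"
  from classify[OF O] show ?thesis
  proof (elim disjE exE)
    fix k assume T: "Tx z k"
    then have "k \<ge> 2" by (simp add: Tx_def)
    then show ?thesis using T by (simp add: BT bl_T G_T)
  next
    fix k assume K: "Kx z k"
    show ?thesis
    proof (cases "k = 0")
      case True then show ?thesis using K by (simp add: BK bl_K G_K0)
    next
      case False then show ?thesis using K by (simp add: BK bl_K G_K)
    qed
  next
    assume "bl z = 1" then show ?thesis by (simp add: B1 G_1)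
  qed
qed

lemma LL_len: "Om x \<Longrightarrow> length (LL x n) \<ge> n"
proof (induction n)
  case 0 then show ?case by simp
next
  case (Suc n)
  have "LL x (Suc n) = LL x n @ G (blk x n)" by (simp add: LL_def)
  moreover have "length (G (blk x n)) \<ge> 1"
    using len_GB[OF Om_sh[OF Suc.prems, of "bp x n"]] by (simp add: blk_eq)
  ultimately show ?case using Suc by simp
qed

lemma LL_nth: "i < length (LL x m) \<Longrightarrow> m \<le> m' \<Longrightarrow> LL x m' ! i = LL x m ! i"
proof -
  assume i: "i < length (LL x m)" and m: "m \<le> m'"
  obtain d where d: "m' = m + d" using m le_Suc_ex by blast
  have "LL x m' = LL x m @ concat (map (\<lambda>j. G (blk x j)) [m..<m+d])"
    unfolding d LL_def by (simp only: upt_add_eq_append[of 0 m d, OF le0] map_append concat_append)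
  then show ?thesis using i by (simp add: nth_append)
qed

lemma LL_Suc: "LL x (Suc n) = G (B x) @ LL (sh (bl x) x) n"
proof -
  have "[0..<Suc n] = 0 # map Suc [0..<n]" by (simp add: map_Suc_upt upt_conv_Cons)
  then show ?thesis by (simp add: LL_def blk_Suc blk_0 o_def)
qed

lemma gm_LL: "gm x i = LL x (Suc i) ! i" by (simp add: gmap_def LL_def)

lemma gm_LL': "Om x \<Longrightarrow> i < length (LL x m) \<Longrightarrow> gm x i = LL x m ! i"
proof -
  assume O: "Om x" and i: "i < length (LL x m)"
  have i2: "i < length (LL x (Suc i))" using LL_len[OF O, of "Suc i"] by simp
  show ?thesis
  proof (cases "m \<le> Suc i")
    case True then show ?thesis using LL_nth[OF i True] gm_LL by simp
  next
    case False then show ?thesis using LL_nth[OF i2, of m] gm_LL by simp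
  qed
qed

lemma R: "Om x \<Longrightarrow> gm x i = (if i < bl x then G (B x) ! i else gm (sh (bl x) x) (i - bl x))"
proof -
  assume O: "Om x"
  have L: "length (G (B x)) = bl x" "bl x \<ge> 1" using len_GB[OF O] by auto
  have e: "gm x i = (G (B x) @ LL (sh (bl x) x) i) ! i" using gm_LL LL_Suc by simp
  show ?thesis
  proof (cases "i < bl x")
    case True then show ?thesis using e L by (simp add: nth_append)
  next
    case False
    have "i - bl x < length (LL (sh (bl x) x) i)"
      using LL_len[OF Om_sh[OF O, of "bl x"], of i] L False by simp
    then have "gm (sh (bl x) x) (i - bl x) = LL (sh (bl x) x) i ! (i - bl x)"
      using gm_LL'[OF Om_sh[OF O]] by blast
    then show ?thesis using e L False by (simp add: nth_append)
  qed
qed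

lemma gm_alpha: "Om x \<Longrightarrow> \<forall>i<j. x i = alp \<Longrightarrow> i < j - 1 \<Longrightarrow> gm x i = alp"
proof (induction j arbitrary: x i)
  case 0 then show ?case by simp
next
  case (Suc j)
  have x01: "x 0 = alp" "x 1 = alp" using Suc.prems by auto
  have S: "x 0 \<in> Sigma N" using Suc.prems(1) by (auto simp: Omega_def)
  have b: "bl x = 1" by (rule bl_1[of x, OF S]) (use x01 d5 d3 in \<open>auto simp: Kx_def\<close>)
  show ?case
  proof (cases "i = 0")
    case True then show ?thesis using R[OF Suc.prems(1), of i] b x01 by (simp add: B1 G_1)
  next
    case False
    have "gm (sh 1 x) (i - 1) = alp"
      apply (rule Suc.IH[OF Om_sh[OF Suc.prems(1)]])
      using Suc.prems False by (auto simp: sh_def)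
    then show ?thesis using R[OF Suc.prems(1), of i] b False by simp
  qed
qed

lemma VT: "Om z \<Longrightarrow> Tx z k \<Longrightarrow> i < k - 1 \<Longrightarrow> gm z i = (if i=0 then kap else alp)"
proof -
  assume O: "Om z" and T: "Tx z k" and i: "i < k - 1"
  have k: "k \<ge> 2" using T by (simp add: Tx_def)
  have ib: "i < bl z" using bl_T[OF T] i by simp
  have "gm z i = G (B z) ! i" using R[OF O, of i] ib by simp
  also have "\<dots> = (kap # replicate (k-2) alp @ [kap,gam]) ! i" using BT[OF T] G_T[OF k] by simp
  also have "\<dots> = (if i=0 then kap else alp)" using i by (intro nthR) simp
  finally show ?thesis .
qed

lemma VK: "Om z \<Longrightarrow> Kx z k \<Longrightarrow> i < k \<Longrightarrow> gm z i = (if i=0 then kap else alp)"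
proof -
  assume O: "Om z" and K: "Kx z k" and i: "i < k"
  have k: "k \<ge> 1" using i by simp
  have ib: "i < bl z" using bl_K[OF K] i by simp
  have "gm z i = G (B z) ! i" using R[OF O, of i] ib by simp
  also have "\<dots> = (kap # replicate (k-1) alp @ [kap,gam,gam]) ! i" using BK[OF K] G_K[OF k] by simp
  also have "\<dots> = (if i=0 then kap else alp)" using i by (intro nthR) simp
  finally show ?thesis .
qed

lemma V3: "Om z \<Longrightarrow> z 0 = kap \<Longrightarrow> (\<forall>i. 1\<le>i \<and> i<n-1 \<longrightarrow> z i = alp) \<Longrightarrow> (\<forall>k. Kx z k \<longrightarrow> n < k+3)
   \<Longrightarrow> i < n-2 \<Longrightarrow> gm z i = (if i=0 then kap else alp)"
proof -
  assume O: "Om z" and z0: "z 0 = kap" and a: "\<forall>i. 1\<le>i \<and> i<n-1 \<longrightarrow> z i = alp"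
    and nK: "\<forall>k. Kx z k \<longrightarrow> n < k+3" and i: "i < n-2"
  show ?thesis
  proof (cases "\<exists>k. Kx z k")
    case True
    then obtain k where K: "Kx z k" by blast
    then show ?thesis using VK[OF O K, of i] nK i by auto
  next
    case False
    have S: "z 0 \<in> Sigma N" using O by (auto simp: Omega_def)
    have b: "bl z = 1" by (rule bl_1[of z, OF S]) (use z0 d1 False in auto)
    show ?thesis
    proof (cases "i = 0")
      case True then show ?thesis using R[OF O, of i] b z0 by (simp add: B1 G_1)
    next
      case False
      have "gm (sh 1 z) (i - 1) = alp"
        apply (rule gm_alpha[OF Om_sh[OF O], of "n-2"])
        using a False i by (auto simp: sh_def)
      then show ?thesis using R[OF O, of i] b False by simp
    qed
  qed
qed


lemma Kx_transfer: "Kx x k \<Longrightarrow> k+3 \<le> n \<Longrightarrow> \<forall>i<n. x i = y i \<Longrightarrow> Kx y k"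
  unfolding Kx_def
proof (elim conjE, intro conjI allI impI)
  assume a: "\<forall>i<n. x i = y i" "k+3 \<le> n" "x 0 = kap" "\<forall>i. 1 \<le> i \<and> i \<le> k \<longrightarrow> x i = alp"
    "x (k + 1) = kap" "x (k + 2) = gam"
  have lt: "0 < n" "k+1 < n" "k+2 < n" using a(2) by auto
  show "y 0 = kap" using a(1,3) lt(1) by metis
  show "y (k+1) = kap" using a(1,5) lt(2) by metis
  show "y (k+2) = gam" using a(1,6) lt(3) by metis
  fix i assume "1 \<le> i \<and> i \<le> k" then show "y i = alp" using a(1,2,4) by auto
qed

lemma main: "Om x \<Longrightarrow> Om y \<Longrightarrow> \<forall>i<n. x i = y i \<Longrightarrow> i < n - 2 \<Longrightarrow> gm x i = gm y i"
proof (induction n arbitrary: x y i rule: less_induct)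
  case (less n)
  note Ox = less.prems(1) and Oy = less.prems(2) and ag = less.prems(3) and i = less.prems(4)
  have step: "gm x i = gm y i" if b: "bl x = b" "bl y = b" "b \<le> n" for b
  proof -
    have b1: "b \<ge> 1" using len_GB[OF Ox] b by simp
    have Bxy: "B x = B y" unfolding B_def using b ag by (auto intro!: map_cong)
    show ?thesis
    proof (cases "i < b")
      case True then show ?thesis using R[OF Ox, of i] R[OF Oy, of i] b Bxy by simp
    next
      case False
      have "gm (sh b x) (i - b) = gm (sh b y) (i - b)"
      proof (rule less.IH[of "n - b"])
        show "n - b < n" using b1 i by simp
        show "Om (sh b x)" "Om (sh b y)" using Om_sh Ox Oy by auto
        show "\<forall>j<n-b. sh b x j = sh b y j" using ag by (simp add: sh_def)
        show "i - b < n - b - 2" using i False by simp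
      qed
      then show ?thesis using R[OF Ox, of i] R[OF Oy, of i] b False by simp
    qed
  qed
  have n3: "n \<ge> 3" using i by simp
  have a0: "x 0 = y 0" "x 1 = y 1" "x 2 = y 2" using ag n3 by auto
  have Sx: "x 0 \<in> Sigma N" using Ox by (auto simp: Omega_def)
  have Sy: "y 0 \<in> Sigma N" using Oy by (auto simp: Omega_def)
  consider (c1) "x 0 \<noteq> tau" "x 0 \<noteq> kap" | (c2) "x 0 = tau" | (c3) "x 0 = kap" by blast
  then show ?case
  proof cases
    case c1
    have "bl x = 1" by (rule bl_1[of x, OF Sx]) (use c1 in \<open>auto simp: Kx_def\<close>)
    moreover have "bl y = 1" by (rule bl_1[of y, OF Sy]) (use c1 a0 in \<open>auto simp: Kx_def\<close>)
    ultimately show ?thesis using step n3 by simp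
  next
    case c2
    show ?thesis
    proof (cases "x 1 = gam \<and> x 2 = gam")
      case True
      obtain kx where Tx: "Tx x kx" using T_exists[OF Ox] c2 True by blast
      obtain ky where Ty: "Tx y ky" using T_exists[OF Oy] c2 True a0 by auto
      show ?thesis
      proof (cases "kx + 1 < n")
        case True
        have "Tx y kx" using Tx True ag unfolding Tx_def by auto
        then show ?thesis using step[of "kx+1"] bl_T Tx True by simp
      next
        case F1: False
        show ?thesis
        proof (cases "ky + 1 < n")
          case True
          have "Tx x ky" using Ty True ag unfolding Tx_def by auto
          then show ?thesis using step[of "ky+1"] bl_T Ty True by simp
        next
          case False
          then show ?thesis using VT[OF Ox Tx, of i] VT[OF Oy Ty, of i] F1 i by simp
        qed
      qed
    next
      case False
      have "bl x = 1" by (rule bl_1[of x, OF Sx]) (use c2 False d1 in \<open>auto simp: Kx_def\<close>)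
      moreover have "bl y = 1" by (rule bl_1[of y, OF Sy]) (use c2 False a0 d1 in \<open>auto simp: Kx_def\<close>)
      ultimately show ?thesis using step n3 by simp
    qed
  next
    case c3
    have ag': "\<forall>i<n. y i = x i" using ag by auto
    show ?thesis
    proof (cases "\<exists>k. Kx x k \<and> k+3 \<le> n")
      case True
      then obtain k where K: "Kx x k" "k+3 \<le> n" by blast
      have "Kx y k" using Kx_transfer[OF K ag] .
      then show ?thesis using step[of "k+3"] bl_K K by simp
    next
      case F1: False
      show ?thesis
      proof (cases "\<exists>k. Kx y k \<and> k+3 \<le> n")
        case True
        then obtain k where K: "Kx y k" "k+3 \<le> n" by blast
        have "Kx x k" using Kx_transfer[OF K ag'] .
        then show ?thesis using step[of "k+3"] bl_K K by simp
      next
        case F2: False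
        show ?thesis
        proof (cases "(\<forall>k. \<not> Kx x k) \<and> (\<forall>k. \<not> Kx y k)")
          case True
          have "bl x = 1" by (rule bl_1[of x, OF Sx]) (use c3 True d1 in auto)
          moreover have "bl y = 1" by (rule bl_1[of y, OF Sy]) (use c3 True a0 d1 in auto)
          ultimately show ?thesis using step n3 by simp
        next
          case False
          have al: "\<forall>j. 1\<le>j \<and> j<n-1 \<longrightarrow> x j = alp \<and> y j = alp"
          proof (cases "\<exists>k. Kx x k")
            case True
            then obtain k where K: "Kx x k" by blast
            then have nk: "n < k + 3" using F1 by auto
            show ?thesis
            proof (intro allI impI)
              fix j assume j: "1\<le>j \<and> j<n-1"
              then have "x j = alp" using K nk unfolding Kx_def by auto
              moreover have "x j = y j" using ag j by (meson diff_le_self less_le_trans)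
              ultimately show "x j = alp \<and> y j = alp" by simp
            qed
          next
            case False
            then obtain k where K: "Kx y k" using \<open>\<not> ((\<forall>k. \<not> Kx x k) \<and> (\<forall>k. \<not> Kx y k))\<close> by blast
            then have nk: "n < k + 3" using F2 by auto
            show ?thesis
            proof (intro allI impI)
              fix j assume j: "1\<le>j \<and> j<n-1"
              then have "y j = alp" using K nk unfolding Kx_def by auto
              moreover have "x j = y j" using ag j by (meson diff_le_self less_le_trans)
              ultimately show "x j = alp \<and> y j = alp" by simp
            qed
          qed
          have "gm x i = (if i=0 then kap else alp)"
            by (rule V3[OF Ox c3 _ _ i]) (use al F1 in \<open>simp_all, meson not_less\<close>)
          moreover have "gm y i = (if i=0 then kap else alp)"
            by (rule V3[OF Oy _ _ _ i]) (use al F2 c3 a0 in \<open>simp_all, meson not_less\<close>)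
          ultimately show ?thesis by simp
        qed
      qed
    qed
  qed
qed

end

theorem lemma7p1:
  fixes N \<tau> \<kappa> \<alpha> \<gamma> :: nat and x y :: word
  assumes "N \<ge> 4"
    and "\<tau> \<in> Sigma N" "\<kappa> \<in> Sigma N" "\<alpha> \<in> Sigma N" "\<gamma> \<in> Sigma N"
    and "\<tau> \<noteq> \<kappa>" "\<tau> \<noteq> \<gamma>" "\<kappa> \<noteq> \<alpha>" "\<kappa> \<noteq> \<gamma>" "\<alpha> \<noteq> \<gamma>"
    and "x \<in> Omega N \<kappa>" "y \<in> Omega N \<kappa>"
  shows "lcp (gmap N \<tau> \<kappa> \<alpha> \<gamma> x) (gmap N \<tau> \<kappa> \<alpha> \<gamma> y) \<ge> lcp x y - 2"
proof -
  interpret L N \<tau> \<kappa> \<alpha> \<gamma> using assms by unfold_locales auto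
  show ?thesis
  proof (cases "x = y")
    case True then show ?thesis by (simp add: lcp_def)
  next
    case False
    define m where "m = (LEAST i. x i \<noteq> y i)"
    have lxy: "lcp x y = enat m" using False by (simp add: lcp_def m_def)
    have agree: "\<forall>i<m. x i = y i" using not_less_Least m_def by blast
    have gag: "\<forall>i<m-2. gm x i = gm y i" using main[OF assms(11,12) agree] by blast
    show ?thesis
    proof (cases "gm x = gm y")
      case True then show ?thesis by (simp add: lcp_def)
    next
      case F: False
      define l where "l = (LEAST i. gm x i \<noteq> gm y i)"
      have "\<exists>i. gm x i \<noteq> gm y i" using F by (auto simp: fun_eq_iff)
      then have "gm x l \<noteq> gm y l" unfolding l_def by (rule LeastI_ex)
      then have "m - 2 \<le> l" using gag by (meson not_le)
      moreover have "lcp (gm x) (gm y) = enat l" using F by (simp add: lcp_def l_def)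
      ultimately show ?thesis using lxy by (simp add: numeral_eq_enat)
    qed
  qed
qed

end
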